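(* Let $n\ge 2k\ge 2$, let $S\subseteq\{0,1,\ldots,k-1\}$ be nonempty, and let $X=\bigcup_{i\in S}J(n,k,i)$. If $X$ admits perfect state transfer between two distinct vertices, then $n=2k$.
   Context: $J(n,k,i)$ is the graph on the $k$-subsets of $\{1,\ldots,n\}$ with $A\sim B$ iff $|A\cap B|=i$; the union $\bigcup_{i\in S}J(n,k,i)$ is the graph on the same vertex set with $A\sim B$ iff $|A\cap B|\in S$. For a simple graph $X$ with adjacency matrix $A$, let $\mathcal{H}_X(t)=e^{itA}$; there is perfect state transfer between vertices $u\ne v$ if $|\mathcal{H}_X(\tau)_{u,v}|=1$ for some $\tau>0$. *)

theory Defs
  imports "HOL-Analysis.Analysis"
begin

definition ksubsets :: "nat \<Rightarrow> nat \<Rightarrow> nat set set" where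
  "ksubsets n k = {A. A \<subseteq> {1..n} \<and> card A = k}"

text \<open>Adjacency relation of the union of J(n,k,i) over i in S.\<close>
definition jgraph_union_adj :: "nat set \<Rightarrow> nat set \<Rightarrow> nat set \<Rightarrow> bool" where
  "jgraph_union_adj S A B \<longleftrightarrow> card (A \<inter> B) \<in> S"

definition adj_matrix :: "('a \<Rightarrow> 'a \<Rightarrow> bool) \<Rightarrow> 'a \<Rightarrow> 'a \<Rightarrow> complex" where
  "adj_matrix E u v = (if E u v then 1 else 0)"

fun mat_pow :: "'a set \<Rightarrow> ('a \<Rightarrow> 'a \<Rightarrow> complex) \<Rightarrow> nat \<Rightarrow> 'a \<Rightarrow> 'a \<Rightarrow> complex" where
  "mat_pow V M 0 = (\<lambda>u v. if u = v then 1 else 0)"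
| "mat_pow V M (Suc m) = (\<lambda>u v. \<Sum>w\<in>V. mat_pow V M m u w * M w v)"

definition transition_matrix ::
  "'a set \<Rightarrow> ('a \<Rightarrow> 'a \<Rightarrow> bool) \<Rightarrow> real \<Rightarrow> 'a \<Rightarrow> 'a \<Rightarrow> complex" where
  "transition_matrix V E t u v =
     (\<Sum>m. (\<i> * complex_of_real t) ^ m / of_nat (fact m) * mat_pow V (adj_matrix E) m u v)"

definition has_pst :: "'a set \<Rightarrow> ('a \<Rightarrow> 'a \<Rightarrow> bool) \<Rightarrow> bool" where
  "has_pst V E \<longleftrightarrow> (\<exists>u\<in>V. \<exists>v\<in>V. u \<noteq> v \<and>
      (\<exists>\<tau>>0. cmod (transition_matrix V E \<tau> u v) = 1))"

end

theory Submission
  imports Defs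
begin

definition TT :: "'a set \<Rightarrow> ('a \<Rightarrow> 'a \<Rightarrow> complex) \<Rightarrow> real \<Rightarrow> 'a \<Rightarrow> 'a \<Rightarrow> complex" where
  "TT V M t u v = (\<Sum>m. (\<i> * complex_of_real t) ^ m / of_nat (fact m) * mat_pow V M m u v)"

lemma ifmul: "(if a then (1::complex) else 0) * x = (if a then x else 0)" by simp

lemma mp_add:
  assumes "finite V" "u \<in> V" "v \<in> V"
  shows "mat_pow V M (m + l) u v = (\<Sum>w\<in>V. mat_pow V M m u w * mat_pow V M l w v)"
  using assms(3)
proof (induction l arbitrary: v)
  case 0
  then show ?case using assms(1) by (simp add: mult.commute[of _ "if _ then _ else _"] ifmul)
next
  case (Suc l)
  have "mat_pow V M (m + Suc l) u v = (\<Sum>w\<in>V. mat_pow V M (m+l) u w * M w v)" by simp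
  also have "\<dots> = (\<Sum>w\<in>V. (\<Sum>x\<in>V. mat_pow V M m u x * mat_pow V M l x w) * M w v)"
    using Suc by simp
  also have "\<dots> = (\<Sum>x\<in>V. mat_pow V M m u x * (\<Sum>w\<in>V. mat_pow V M l x w * M w v))"
    unfolding sum_distrib_right sum_distrib_left mult.assoc by (rule sum.swap)
  finally show ?case by simp
qed

lemma mp_one: "finite V \<Longrightarrow> u \<in> V \<Longrightarrow> mat_pow V M 1 u v = M u v"
proof -
  assume a: "finite V" "u \<in> V"
  have "mat_pow V M 1 u v = (\<Sum>w\<in>V. (if u = w then M w v else 0))"
    by (simp add: ifmul)
  also have "\<dots> = M u v" using a by simp
  finally show ?thesis .
qed

lemma mp_herm:
  assumes "finite V" "\<And>x y. cnj (M x y) = M y x" "x \<in> V" "y \<in> V"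
  shows "cnj (mat_pow V M m x y) = mat_pow V M m y x"
  using assms(3,4)
proof (induction m arbitrary: x y)
  case 0 then show ?case by auto
next
  case (Suc m)
  have "cnj (mat_pow V M (Suc m) x y) = (\<Sum>w\<in>V. cnj (mat_pow V M m x w) * cnj (M w y))"
    by simp
  also have "\<dots> = (\<Sum>w\<in>V. mat_pow V M 1 y w * mat_pow V M m w x)"
  proof (rule sum.cong[OF refl])
    fix w assume w: "w \<in> V"
    have "cnj (mat_pow V M m x w) = mat_pow V M m w x" using Suc.IH[OF Suc.prems(1) w] .
    moreover have "cnj (M w y) = mat_pow V M 1 y w" using mp_one[OF assms(1) Suc.prems(2)] assms(2) by metis
    ultimately show "cnj (mat_pow V M m x w) * cnj (M w y) = mat_pow V M 1 y w * mat_pow V M m w x"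
      by (simp only: mult.commute)
  qed
  also have "\<dots> = mat_pow V M (1 + m) y x" using mp_add[OF assms(1) Suc.prems(2,1)] by (rule sym)
  finally show ?case by (simp only: plus_1_eq_Suc)
qed

lemma mp_bound:
  assumes "finite V" "\<And>x y. cmod (M x y) \<le> 1"
  shows "cmod (mat_pow V M m x y) \<le> real (card V) ^ m"
proof (induction m arbitrary: x y)
  case 0 then show ?case by auto
next
  case (Suc m)
  have "cmod (mat_pow V M (Suc m) x y) \<le> (\<Sum>w\<in>V. cmod (mat_pow V M m x w * M w y))"
    unfolding mat_pow.simps by (rule norm_sum)
  also have "\<dots> \<le> (\<Sum>w\<in>V. real (card V) ^ m)"
  proof (rule sum_mono)
    fix w
    have "cmod (mat_pow V M m x w) * cmod (M w y) \<le> real (card V) ^ m * 1"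
      by (rule mult_mono[OF Suc.IH assms(2)]) auto
    then show "cmod (mat_pow V M m x w * M w y) \<le> real (card V) ^ m" by (simp add: norm_mult)
  qed
  finally show ?case by simp
qed

lemma term_summable:
  assumes "finite V" "\<And>x y. cmod (M x y) \<le> 1"
  shows "summable (\<lambda>m. norm ((\<i> * complex_of_real t) ^ m / of_nat (fact m) * mat_pow V M m u v))"
proof (rule summable_comparison_test)
  let ?c = "real (card V)"
  show "summable (\<lambda>m. inverse (fact m) * (\<bar>t\<bar> * ?c) ^ m)" by (rule summable_exp)
  show "\<exists>N. \<forall>m\<ge>N. norm (norm ((\<i> * complex_of_real t) ^ m / of_nat (fact m) * mat_pow V M m u v))
     \<le> inverse (fact m) * (\<bar>t\<bar> * ?c) ^ m"
  proof (intro exI allI impI)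
    fix m :: nat
    have "norm (norm ((\<i> * complex_of_real t) ^ m / of_nat (fact m) * mat_pow V M m u v))
       = \<bar>t\<bar>^m / fact m * cmod (mat_pow V M m u v)"
      by (simp add: norm_mult norm_divide norm_power)
    also have "\<dots> \<le> \<bar>t\<bar>^m / fact m * ?c ^ m"
      by (rule mult_left_mono[OF mp_bound[OF assms]]) simp
    finally show "norm (norm ((\<i> * complex_of_real t) ^ m / of_nat (fact m) * mat_pow V M m u v))
     \<le> inverse (fact m) * (\<bar>t\<bar> * ?c) ^ m" by (simp add: power_mult_distrib divide_inverse mult_ac)
  qed
qed

lemma sR_conv: "(x::complex) ^ n /\<^sub>R fact n = x ^ n / of_nat (fact n)"
  by (simp add: divide_inverse scaleR_conv_of_real mult.commute)

lemma coef_add: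
  "(\<Sum>i\<le>N. (\<i> * complex_of_real t) ^ i / of_nat (fact i) * ((\<i> * complex_of_real s) ^ (N - i) / of_nat (fact (N - i))))
   = (\<i> * complex_of_real (t + s)) ^ N / of_nat (fact N)"
  using exp_series_add_commuting[of "\<i> * complex_of_real t" "\<i> * complex_of_real s" N]
  by (simp add: sR_conv distrib_left mult.commute)

lemma TT_mult:
  assumes V: "finite V" and bd: "\<And>x y. cmod (M x y) \<le> 1" and u: "u \<in> V" and v: "v \<in> V"
  shows "(\<Sum>w\<in>V. TT V M t u w * TT V M s w v) = TT V M (t + s) u v"
proof -
  define a where "a w i = (\<i> * complex_of_real t) ^ i / of_nat (fact i) * mat_pow V M i u w" for w i
  define b where "b w j = (\<i> * complex_of_real s) ^ j / of_nat (fact j) * mat_pow V M j w v" for w j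
  have 1: "(\<lambda>N. \<Sum>i\<le>N. a w i * b w (N - i)) sums (TT V M t u w * TT V M s w v)" for w
    unfolding TT_def a_def b_def
    by (rule Cauchy_product_sums[OF term_summable[OF V bd] term_summable[OF V bd]])
  have 2: "(\<lambda>N. \<Sum>w\<in>V. \<Sum>i\<le>N. a w i * b w (N - i)) sums (\<Sum>w\<in>V. TT V M t u w * TT V M s w v)"
    by (rule sums_sum[OF 1])
  have 3: "(\<Sum>w\<in>V. \<Sum>i\<le>N. a w i * b w (N - i)) = (\<i> * complex_of_real (t + s)) ^ N / of_nat (fact N) * mat_pow V M N u v" for N
  proof -
    have "(\<Sum>w\<in>V. \<Sum>i\<le>N. a w i * b w (N - i)) = (\<Sum>i\<le>N. \<Sum>w\<in>V. a w i * b w (N - i))"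
      by (rule sum.swap)
    also have "\<dots> = (\<Sum>i\<le>N. ((\<i> * complex_of_real t) ^ i / of_nat (fact i) * ((\<i> * complex_of_real s) ^ (N - i) / of_nat (fact (N - i))))
        * (\<Sum>w\<in>V. mat_pow V M i u w * mat_pow V M (N - i) w v))"
      unfolding a_def b_def sum_distrib_left by (intro sum.cong refl) (simp add: mult_ac)
    also have "\<dots> = (\<Sum>i\<le>N. ((\<i> * complex_of_real t) ^ i / of_nat (fact i) * ((\<i> * complex_of_real s) ^ (N - i) / of_nat (fact (N - i))))
        * mat_pow V M N u v)"
    proof (rule sum.cong[OF refl])
      fix i assume "i \<in> {..N}"
      then have "i + (N - i) = N" by simp
      then show "((\<i> * complex_of_real t) ^ i / of_nat (fact i) * ((\<i> * complex_of_real s) ^ (N - i) / of_nat (fact (N - i))))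
        * (\<Sum>w\<in>V. mat_pow V M i u w * mat_pow V M (N - i) w v) = ((\<i> * complex_of_real t) ^ i / of_nat (fact i) * ((\<i> * complex_of_real s) ^ (N - i) / of_nat (fact (N - i))))
        * mat_pow V M N u v"
        using mp_add[OF V u v, of M i "N - i"] by simp
    qed
    also have "\<dots> = (\<i> * complex_of_real (t + s)) ^ N / of_nat (fact N) * mat_pow V M N u v"
      by (simp only: sum_distrib_right[symmetric] coef_add)
    finally show ?thesis .
  qed
  have "(\<lambda>N. (\<i> * complex_of_real (t + s)) ^ N / of_nat (fact N) * mat_pow V M N u v) sums (\<Sum>w\<in>V. TT V M t u w * TT V M s w v)"
    using 2 unfolding 3 .
  then show ?thesis unfolding TT_def by (simp add: sums_iff)
qed


lemma TT_zero:
  assumes "u \<in> V" "v \<in> V"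
  shows "TT V M 0 u v = (if u = v then 1 else 0)"
proof -
  have "(\<lambda>m. (\<i> * complex_of_real 0) ^ m / of_nat (fact m) * mat_pow V M m u v)
      = (\<lambda>m. if m = 0 then (if u = v then 1 else 0) else 0)"
    by (rule ext, case_tac m) auto
  moreover have "(\<lambda>m. if m = 0 then (if u = v then 1 else 0) else 0) sums (if u = v then (1::complex) else 0)"
    using sums_single[of 0 "\<lambda>_. if u = v then (1::complex) else 0"] by simp
  ultimately show ?thesis unfolding TT_def by (simp add: sums_iff)
qed

lemma TT_cnj:
  assumes V: "finite V" and bd: "\<And>x y. cmod (M x y) \<le> 1"
    and H: "\<And>x y. cnj (M x y) = M y x" and u: "u \<in> V" and w: "w \<in> V"
  shows "cnj (TT V M t u w) = TT V M (-t) w u"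
proof -
  let ?f = "\<lambda>m. (\<i> * complex_of_real t) ^ m / of_nat (fact m) * mat_pow V M m u w"
  have "summable ?f" by (rule summable_norm_cancel[OF term_summable[OF V bd]])
  then have "(\<lambda>m. cnj (?f m)) sums cnj (suminf ?f)" by (rule sums_cnj[THEN iffD2, OF summable_sums])
  moreover have "(\<lambda>m. cnj (?f m)) = (\<lambda>m. (\<i> * complex_of_real (-t)) ^ m / of_nat (fact m) * mat_pow V M m w u)"
    using mp_herm[OF V H u w] by (simp add: fun_eq_iff)
  ultimately show ?thesis unfolding TT_def by (simp add: sums_iff)
qed

lemma TT_norm:
  assumes V: "finite V" and bd: "\<And>x y. cmod (M x y) \<le> 1"
    and H: "\<And>x y. cnj (M x y) = M y x" and u: "u \<in> V"
  shows "(\<Sum>w\<in>V. (cmod (TT V M t u w))\<^sup>2) = 1"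
proof -
  have "complex_of_real (\<Sum>w\<in>V. (cmod (TT V M t u w))\<^sup>2) = (\<Sum>w\<in>V. TT V M t u w * cnj (TT V M t u w))"
    by (simp only: of_real_sum complex_norm_square)
  also have "\<dots> = (\<Sum>w\<in>V. TT V M t u w * TT V M (-t) w u)"
    by (intro sum.cong refl) (simp add: TT_cnj[OF V bd H u])
  also have "\<dots> = TT V M (t + - t) u u" by (rule TT_mult[OF V bd u u])
  also have "\<dots> = 1" using TT_zero[OF u u] by simp
  finally show ?thesis by (simp only: of_real_eq_1_iff)
qed

lemma mp_inv:
  assumes V: "finite V" and s: "bij_betw \<sigma> V V" and Mi: "\<And>x y. x \<in> V \<Longrightarrow> y \<in> V \<Longrightarrow> M (\<sigma> x) (\<sigma> y) = M x y"
    and x: "x \<in> V" and y: "y \<in> V"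
  shows "mat_pow V M m (\<sigma> x) (\<sigma> y) = mat_pow V M m x y"
  using y
proof (induction m arbitrary: y)
  case 0
  have "inj_on \<sigma> V" using s by (simp add: bij_betw_def)
  then show ?case using x 0 by (auto dest: inj_onD)
next
  case (Suc m)
  have inj: "inj_on \<sigma> V" and img: "\<sigma> ` V = V" using s by (auto simp: bij_betw_def)
  have "mat_pow V M (Suc m) (\<sigma> x) (\<sigma> y) = (\<Sum>w\<in>V. mat_pow V M m (\<sigma> x) w * M w (\<sigma> y))"
    by simp
  also have "\<dots> = (\<Sum>w\<in>\<sigma> ` V. mat_pow V M m (\<sigma> x) w * M w (\<sigma> y))"
    by (simp only: img)
  also have "\<dots> = (\<Sum>w\<in>V. mat_pow V M m (\<sigma> x) (\<sigma> w) * M (\<sigma> w) (\<sigma> y))"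
    by (simp add: sum.reindex[OF inj])
  also have "\<dots> = (\<Sum>w\<in>V. mat_pow V M m x w * M w y)"
    by (intro sum.cong refl) (simp add: Suc.IH Mi Suc.prems)
  finally show ?case by simp
qed

lemma TT_inv:
  assumes V: "finite V" and s: "bij_betw \<sigma> V V" and Mi: "\<And>x y. x \<in> V \<Longrightarrow> y \<in> V \<Longrightarrow> M (\<sigma> x) (\<sigma> y) = M x y"
    and x: "x \<in> V" and y: "y \<in> V"
  shows "TT V M t (\<sigma> x) (\<sigma> y) = TT V M t x y"
  unfolding TT_def using mp_inv[where M=M, OF V s Mi x y] by simp

lemma no_pst_aut:
  assumes V: "finite V" and bd: "\<And>x y. cmod (M x y) \<le> 1"
    and H: "\<And>x y. cnj (M x y) = M y x"
    and s: "bij_betw \<sigma> V V" and Mi: "\<And>x y. x \<in> V \<Longrightarrow> y \<in> V \<Longrightarrow> M (\<sigma> x) (\<sigma> y) = M x y"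
    and u: "u \<in> V" and v: "v \<in> V" and su: "\<sigma> u = u" and sv: "\<sigma> v \<noteq> v"
    and c: "cmod (TT V M t u v) = 1"
  shows False
proof -
  have sv': "\<sigma> v \<in> V" using s v by (auto simp: bij_betw_def)
  have c': "cmod (TT V M t u (\<sigma> v)) = 1" using TT_inv[where M=M and t=t, OF V s Mi u v] su c by simp
  have "(\<Sum>w\<in>{v, \<sigma> v}. (cmod (TT V M t u w))\<^sup>2) \<le> (\<Sum>w\<in>V. (cmod (TT V M t u w))\<^sup>2)"
    by (rule sum_mono2[OF V]) (use v sv' in auto)
  also have "\<dots> = 1" by (rule TT_norm[OF V bd H u])
  finally show False using c c' sv by simp
qed


lemma tm_TT: "transition_matrix V E t u v = TT V (adj_matrix E) t u v"
  unfolding transition_matrix_def TT_def by simp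

theorem mainTheorem17:
  fixes n k :: nat and S :: "nat set"
  assumes "2 * k \<le> n" and "1 \<le> k"
    and "S \<noteq> {}" and "S \<subseteq> {0..<k}"
    and "has_pst (ksubsets n k) (jgraph_union_adj S)"
  shows "n = 2 * k"
proof (rule ccontr)
  assume ne: "n \<noteq> 2 * k"
  with assms(1) have gt: "2 * k < n" by simp
  let ?V = "ksubsets n k"
  let ?M = "adj_matrix (jgraph_union_adj S)"
  have V: "finite ?V" unfolding ksubsets_def
    by (rule finite_subset[of _ "Pow {1..n}"]) auto
  have bd: "cmod (?M x y) \<le> 1" for x y by (simp add: adj_matrix_def)
  have H: "cnj (?M x y) = ?M y x" for x y by (simp add: adj_matrix_def jgraph_union_adj_def Int_commute)
  obtain A B \<tau> where A: "A \<in> ?V" and B: "B \<in> ?V" and AB: "A \<noteq> B"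
    and c: "cmod (TT ?V ?M \<tau> A B) = 1"
    using assms(5) unfolding has_pst_def tm_TT by blast
  have Asub: "A \<subseteq> {1..n}" and cA: "card A = k" and Bsub: "B \<subseteq> {1..n}" and cB: "card B = k"
    using A B by (auto simp: ksubsets_def)
  have fA: "finite A" and fB: "finite B" using Asub Bsub finite_subset by blast+
  obtain b where b: "b \<in> B" "b \<notin> A"
  proof -
    have "\<not> B \<subseteq> A"
    proof
      assume "B \<subseteq> A"
      then have "B = A" using card_subset_eq[OF fA] cA cB by simp
      then show False using AB by simp
    qed
    then show ?thesis using that by blast
  qed
  obtain c0 where c0: "c0 \<in> {1..n}" "c0 \<notin> A" "c0 \<notin> B"
  proof -
    have "card (A \<union> B) \<le> 2 * k" using card_Un_le[of A B] cA cB by simp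
    moreover have "card ({1..n} - (A \<union> B)) = n - card (A \<union> B)"
      using Asub Bsub by (subst card_Diff_subset) (auto intro: finite_subset)
    ultimately have "card ({1..n} - (A \<union> B)) > 0" using gt by simp
    then have "{1..n} - (A \<union> B) \<noteq> {}" by (metis card.empty less_irrefl)
    then show ?thesis using that by blast
  qed
  define f where "f x = (if x = b then c0 else if x = c0 then b else x)" for x
  have ff: "f (f x) = x" for x by (simp add: f_def)
  have finj: "inj f" by (metis ff injI)
  define \<sigma> where "\<sigma> X = f ` X" for X
  have \<sigma>\<sigma>: "\<sigma> (\<sigma> X) = X" for X by (simp add: \<sigma>_def image_image ff)
  have bn: "b \<in> {1..n}" using b Bsub by auto
  have \<sigma>V: "\<sigma> X \<in> ?V" if "X \<in> ?V" for X
  proof -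
    have "X \<subseteq> {1..n}" "card X = k" using that by (auto simp: ksubsets_def)
    moreover have "f ` X \<subseteq> {1..n}" using \<open>X \<subseteq> {1..n}\<close> bn c0(1) by (auto simp: f_def)
    moreover have "card (f ` X) = card X" using card_image[OF inj_on_subset[OF finj]] by simp
    ultimately show ?thesis by (simp add: ksubsets_def \<sigma>_def)
  qed
  have s: "bij_betw \<sigma> ?V ?V"
    by (rule bij_betw_byWitness[where f'=\<sigma>]) (auto simp: \<sigma>\<sigma> \<sigma>V)
  have Mi: "?M (\<sigma> X) (\<sigma> Y) = ?M X Y" if "X \<in> ?V" "Y \<in> ?V" for X Y
  proof -
    have "\<sigma> X \<inter> \<sigma> Y = f ` (X \<inter> Y)" unfolding \<sigma>_def by (rule image_Int[OF finj, symmetric])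
    then have "card (\<sigma> X \<inter> \<sigma> Y) = card (X \<inter> Y)"
      using card_image[OF inj_on_subset[OF finj]] by simp
    then show ?thesis by (simp add: adj_matrix_def jgraph_union_adj_def)
  qed
  have sA: "\<sigma> A = A"
  proof -
    have "f x = x" if "x \<in> A" for x using that b c0 by (auto simp: f_def)
    then show ?thesis unfolding \<sigma>_def by simp
  qed
  have sB: "\<sigma> B \<noteq> B"
  proof
    assume "\<sigma> B = B"
    moreover have "c0 \<in> \<sigma> B" unfolding \<sigma>_def using b by (auto simp: f_def)
    ultimately show False using c0 by simp
  qed
  show False
    by (rule no_pst_aut[OF V bd H s Mi A B sA sB c])
qed

end
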